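(* Let $N\ge1$, $k>0$, $\mathcal{E}>0$, $\gamma=\mathcal{E}/k$. Suppose $v_1,\dots,v_N$ are pairwise distinct nonzero numbers satisfying $$\frac{\mathcal{E}(1-v_k^2)+k(1-N)v_k}{k v_k^2}=\sum_{j\neq k}^{N}\frac{2}{v_j-v_k},\qquad k=1,\dots,N,$$ and put $E=-\frac{kN^2}{8}+\frac{\mathcal{E}}{2}\sum_{j=1}^N v_j$. Define $$\psi(x)=\exp(-\gamma\cosh x)\prod_{j=1}^N\big(e^{x/2}-v_je^{-x/2}\big),\qquad V(x)=\gamma^2\sinh^2x-(N+1)\gamma\cosh x.$$ Then $-\psi''(x)+V(x)\psi(x)=\frac{2E}{k}\,\psi(x)$ for all real $x$. *)

theory Defs
  imports "HOL-Analysis.Analysis"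
begin

definition psiN :: "real \<Rightarrow> nat \<Rightarrow> (nat \<Rightarrow> complex) \<Rightarrow> real \<Rightarrow> complex" where
  "psiN \<gamma> N v x = complex_of_real (exp (- \<gamma> * cosh x)) *
     (\<Prod>j\<in>{1..N}. complex_of_real (exp (x / 2)) - v j * complex_of_real (exp (- x / 2)))"

definition VN :: "real \<Rightarrow> nat \<Rightarrow> real \<Rightarrow> real" where
  "VN \<gamma> N x = \<gamma>^2 * (sinh x)^2 - (real N + 1) * \<gamma> * cosh x"

end

theory Submission imports Defs "HOL-Computational_Algebra.Polynomial" begin

lemma coeff_lin_mult_Suc: fixes p :: "'a::comm_ring_1 poly" shows "coeff ([:-a,1:] * p) (Suc n) = coeff p n - a * coeff p (Suc n)"
  by (simp add: algebra_simps)
lemma coeff_lin_mult_0: fixes p :: "'a::comm_ring_1 poly" shows "coeff ([:-a,1:] * p) 0 = - a * coeff p 0"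
  by simp

lemma Pcoeffs:
  fixes v :: "nat \<Rightarrow> 'a::comm_ring_1"
  assumes "finite A"
  shows "coeff (\<Prod>j\<in>A. [:-v j,1:]) (card A) = 1 \<and> (\<forall>n>card A. coeff (\<Prod>j\<in>A. [:-v j,1:]) n = 0)
     \<and> (A \<noteq> {} \<longrightarrow> coeff (\<Prod>j\<in>A. [:-v j,1:]) (card A - 1) = - (\<Sum>j\<in>A. v j))"
  using assms
proof (induction A rule: finite_induct)
  case empty
  then show ?case by (auto simp: coeff_1)
next
  case (insert a A)
  let ?p = "\<Prod>j\<in>A. [:-v j,1:]"
  have e: "(\<Prod>j\<in>insert a A. [:-v j,1:]) = [:-v a,1:] * ?p" using insert by simp
  have c: "card (insert a A) = Suc (card A)" using insert by simp
  have 1: "coeff (\<Prod>j\<in>insert a A. [:-v j,1:]) (card (insert a A)) = 1"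
    unfolding e c coeff_lin_mult_Suc using insert by simp
  have 2: "\<forall>n>card (insert a A). coeff (\<Prod>j\<in>insert a A. [:-v j,1:]) n = 0"
  proof (intro allI impI)
    fix n assume "n > card (insert a A)"
    then obtain m where m: "n = Suc m" "m > card A" using c by (cases n) auto
    show "coeff (\<Prod>j\<in>insert a A. [:-v j,1:]) n = 0"
      unfolding e m coeff_lin_mult_Suc using insert m by simp
  qed
  have 3: "coeff (\<Prod>j\<in>insert a A. [:-v j,1:]) (card (insert a A) - 1) = - (\<Sum>j\<in>insert a A. v j)"
  proof (cases "A = {}")
    case True
    then show ?thesis by simp
  next
    case False
    then have "card A > 0" using insert by auto
    then obtain m where m: "card A = Suc m" by (cases "card A") auto
    show ?thesis unfolding e c using insert False m
      by (simp add: coeff_lin_mult_Suc algebra_simps)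
  qed
  show ?case using 1 2 3 by blast
qed


lemma coeff_pCons0: "coeff (pCons 0 q) n = (if n = 0 then 0 else coeff q (n-1))"
  by (cases n) auto
lemma coeff_pCons00: "coeff (pCons 0 (pCons 0 q)) n = (if n < 2 then 0 else coeff q (n-2))"
  by (cases n) (auto simp: coeff_pCons0)

lemma pderiv_sum: "pderiv (sum f A) = (\<Sum>a\<in>A. pderiv (f a))"
  by (induction A rule: infinite_finite_induct) (simp_all add: pderiv_add)

lemma prod_remove_div:
  fixes f :: "nat \<Rightarrow> complex"
  assumes "finite B" "b \<in> B" "f b \<noteq> 0"
  shows "prod f (B - {b}) = prod f B / f b"
  using prod.remove[OF assms(1,2), of f] assms(3) by simp

lemma Q_zero:
  fixes v :: "nat \<Rightarrow> complex" and c :: complex and N :: nat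
  assumes N1: "N \<ge> 1" and inj: "inj_on v {1..N}"
    and root: "\<forall>i\<in>{1..N}. c * (1 - (v i)^2) + (1 - of_nat N) * v i
        = - 2 * (v i)^2 * (\<Sum>j\<in>{1..N}-{i}. 1 / (v i - v j))"
  defines "P \<equiv> (\<Prod>j\<in>{1..N}. [:-v j,1:])"
  defines "Q \<equiv> - pCons 0 (pCons 0 (pderiv (pderiv P))) + smult (of_nat N - 1) (pCons 0 (pderiv P))
     + smult c (pCons 0 (pCons 0 (pderiv P)) - pderiv P)
     - smult c (smult (of_nat N) (pCons 0 P) + smult (\<Sum>j\<in>{1..N}. v j) P)"
  shows "Q = 0"
proof -
  define I where "I = {1..N}"
  define s where "s = (\<Sum>j\<in>{1..N}. v j)"
  have cI: "card I = N" and fI: "finite I" and neI: "I \<noteq> {}" using N1 by (auto simp: I_def)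
  have PC: "coeff P N = 1" "\<And>n. n > N \<Longrightarrow> coeff P n = 0" "coeff P (N - 1) = - s"
    using Pcoeffs[OF fI, of v] cI neI unfolding P_def I_def s_def by auto
  have deg: "degree Q < N"
  proof (rule degree_lessI)
    show "Q \<noteq> 0 \<or> 0 < N" using N1 by simp
    show "\<forall>k\<ge>N. coeff Q k = 0"
    proof (intro allI impI)
      fix n assume n: "n \<ge> N"
      have cq: "coeff Q n = - (if n < 2 then 0 else of_nat (n-1) * of_nat n * coeff P n)
          + (of_nat N - 1) * (if n = 0 then 0 else of_nat n * coeff P n)
          + c * ((if n < 2 then 0 else of_nat (n-1) * coeff P (n-1)) - of_nat (Suc n) * coeff P (Suc n))
          - c * (of_nat N * (if n = 0 then 0 else coeff P (n-1)) + s * coeff P n)"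
      proof -
        consider "n = 0" | "n = 1" | l where "n = Suc (Suc l)" by (cases n; cases "n - 1") auto
        then show ?thesis
          by cases (auto simp: Q_def s_def coeff_pCons0 coeff_pCons00 coeff_pderiv algebra_simps)
      qed
      consider "n = N" | "n = Suc N" | "n > Suc N" using n by linarith
      then show "coeff Q n = 0"
      proof cases
        case 1
        then show ?thesis unfolding cq using PC N1
          by (cases "N = 1") (auto simp: algebra_simps of_nat_diff)
      next
        case 2
        then show ?thesis unfolding cq using PC N1 by (auto simp: algebra_simps)
      next
        case 3
        then show ?thesis unfolding cq using PC N1 by auto
      qed
    qed
  qed
  have roots: "poly Q (v k) = 0" if k: "k \<in> I" for k
  proof -
    define f where "f j = v k - v j" for j
    have fnz: "f j \<noteq> 0" if "j \<in> I" "j \<noteq> k" for j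
      using inj that k unfolding f_def I_def by (auto dest: inj_onD)
    have fk: "f k = 0" by (simp add: f_def)
    define D where "D = prod f (I - {k})"
    define S where "S = (\<Sum>b\<in>I-{k}. 1 / f b)"
    have polyprod: "poly (\<Prod>j\<in>B. [:-v j,1:]) (v k) = prod f B" for B
      by (simp add: poly_prod f_def)
    have P1: "pderiv P = (\<Sum>a\<in>I. \<Prod>j\<in>I-{a}. [:-v j,1:])"
      unfolding P_def I_def by (simp add: pderiv_prod pderiv_pCons)
    have P2: "pderiv (pderiv P) = (\<Sum>a\<in>I. \<Sum>b\<in>I-{a}. \<Prod>j\<in>I-{a}-{b}. [:-v j,1:])"
      unfolding P1 by (simp add: pderiv_sum pderiv_prod pderiv_pCons)
    have P0v: "poly P (v k) = 0"
      unfolding P_def polyprod using k fI fk I_def by (auto simp: prod_zero_iff)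
    have zero_if: "prod f B = 0" if "k \<in> B" "finite B" for B
      using that fk by (auto simp: prod_zero_iff)
    have P1v: "poly (pderiv P) (v k) = D"
    proof -
      have "poly (pderiv P) (v k) = (\<Sum>a\<in>I. prod f (I - {a}))"
        unfolding P1 by (simp add: poly_sum polyprod)
      also have "\<dots> = prod f (I - {k}) + (\<Sum>a\<in>I-{k}. prod f (I - {a}))"
        using sum.remove[OF fI k] by simp
      also have "(\<Sum>a\<in>I-{k}. prod f (I - {a})) = 0"
        using k fI by (intro sum.neutral ballI zero_if) auto
      finally show ?thesis by (simp add: D_def)
    qed
    have P2v: "poly (pderiv (pderiv P)) (v k) = 2 * D * S"
    proof -
      have "poly (pderiv (pderiv P)) (v k) = (\<Sum>a\<in>I. \<Sum>b\<in>I-{a}. prod f (I-{a}-{b}))"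
        unfolding P2 by (simp add: poly_sum polyprod)
      also have "\<dots> = (\<Sum>b\<in>I-{k}. prod f (I-{k}-{b})) + (\<Sum>a\<in>I-{k}. \<Sum>b\<in>I-{a}. prod f (I-{a}-{b}))"
        using sum.remove[OF fI k] by simp
      also have "(\<Sum>b\<in>I-{k}. prod f (I-{k}-{b})) = (\<Sum>b\<in>I-{k}. D / f b)"
        unfolding D_def using fI fnz by (intro sum.cong refl prod_remove_div) auto
      also have "(\<Sum>a\<in>I-{k}. \<Sum>b\<in>I-{a}. prod f (I-{a}-{b})) = (\<Sum>a\<in>I-{k}. D / f a)"
      proof (intro sum.cong refl)
        fix a assume a: "a \<in> I - {k}"
        have kin: "k \<in> I - {a}" using a k by auto
        have "(\<Sum>b\<in>I-{a}. prod f (I-{a}-{b})) = prod f (I-{a}-{k}) + (\<Sum>b\<in>I-{a}-{k}. prod f (I-{a}-{b}))"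
          using sum.remove[OF _ kin] fI by simp
        also have "(\<Sum>b\<in>I-{a}-{k}. prod f (I-{a}-{b})) = 0"
          by (intro sum.neutral ballI zero_if) (use k fI a in auto)
        also have "I-{a}-{k} = I-{k}-{a}" by auto
        also have "prod f (I-{k}-{a}) = D / f a"
          unfolding D_def by (rule prod_remove_div) (use fI fnz a in auto)
        finally show "(\<Sum>b\<in>I-{a}. prod f (I-{a}-{b})) = D / f a" by simp
      qed
      finally show ?thesis by (simp add: S_def sum_divide_distrib[symmetric] sum_distrib_left)
    qed
    have rk: "c * (1 - (v k)^2) + (1 - of_nat N) * v k = - 2 * (v k)^2 * S"
      using root k unfolding S_def f_def I_def by auto
    have "poly Q (v k) = D * (- 2 * (v k)^2 * S + (of_nat N - 1) * v k + c * ((v k)^2 - 1))"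
      unfolding Q_def using P0v P1v P2v by (simp add: algebra_simps power2_eq_square)
    also have "- 2 * (v k)^2 * S + (of_nat N - 1) * v k + c * ((v k)^2 - 1) = 0"
      using rk by (simp add: algebra_simps)
    finally show ?thesis by simp
  qed
  have cardv: "card (v ` I) = N" using inj cI by (simp add: card_image I_def)
  show "Q = 0"
    by (rule poly_eqI_degree[of "v ` I"]) (use roots deg cardv in auto)
qed


lemma G_deriv:
  fixes c :: complex and n :: complex
  shows "((\<lambda>z. exp (- c * (exp z + exp (- z)) / 2 - n * z / 2)) has_field_derivative
     exp (- c * (exp z + exp (- z)) / 2 - n * z / 2) * (- c * (exp z - exp (- z)) / 2 - n / 2)) (at z)"
  by (auto intro!: derivative_eq_intros simp: field_simps)

lemma A_deriv:
  fixes c :: complex and n :: complex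
  shows "((\<lambda>z. - c * (exp z - exp (- z)) / 2 - n / 2) has_field_derivative
     - c * (exp z + exp (- z)) / 2) (at z)"
  by (auto intro!: derivative_eq_intros simp: field_simps)

lemma polyexp_deriv:
  fixes P :: "complex poly"
  shows "((\<lambda>z. poly P (exp z)) has_field_derivative poly (pderiv P) (exp z) * exp z) (at z)"
  by (auto intro!: derivative_eq_intros DERIV_chain2[OF poly_DERIV])


theorem mainTheorem5:
  fixes N :: nat and k calE \<gamma> :: real and v :: "nat \<Rightarrow> complex" and E :: complex
  assumes "N \<ge> 1" and "k > 0" and "calE > 0" and "\<gamma> = calE / k"
    and "inj_on v {1..N}" and "\<forall>i\<in>{1..N}. v i \<noteq> 0"
    and "\<forall>i\<in>{1..N}.
      (of_real calE * (1 - (v i)^2) + of_real k * (1 - of_nat N) * v i) / (of_real k * (v i)^2)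
        = (\<Sum>j\<in>{1..N} - {i}. 2 / (v j - v i))"
    and "E = - of_real k * (of_nat N)^2 / 8 + of_real calE / 2 * (\<Sum>j\<in>{1..N}. v j)"
  shows "\<forall>x::real.
    - vector_derivative (\<lambda>t. vector_derivative (psiN \<gamma> N v) (at t)) (at x)
      + complex_of_real (VN \<gamma> N x) * psiN \<gamma> N v x
    = 2 * E / of_real k * psiN \<gamma> N v x"
proof
  fix x :: real
  define c where "c = complex_of_real \<gamma>"
  define n where "n = (of_nat N :: complex)"
  define s where "s = (\<Sum>j\<in>{1..N}. v j)"
  define P where "P = (\<Prod>j\<in>{1..N}. [:-v j,1:])"
  define Q where "Q = - pCons 0 (pCons 0 (pderiv (pderiv P))) + smult (of_nat N - 1) (pCons 0 (pderiv P))
     + smult c (pCons 0 (pCons 0 (pderiv P)) - pderiv P)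
     - smult c (smult (of_nat N) (pCons 0 P) + smult (\<Sum>j\<in>{1..N}. v j) P)"
  have kne: "complex_of_real k \<noteq> 0" using assms(2) by simp
  have cE: "complex_of_real calE = c * of_real k"
    using assms(2,4) unfolding c_def by (simp add: field_simps flip: of_real_mult)
  have root: "\<forall>i\<in>{1..N}. c * (1 - (v i)^2) + (1 - of_nat N) * v i
        = - 2 * (v i)^2 * (\<Sum>j\<in>{1..N}-{i}. 1 / (v i - v j))"
  proof
    fix i assume i: "i \<in> {1..N}"
    have vi: "v i \<noteq> 0" using assms(6) i by auto
    have h: "(of_real calE * (1 - (v i)^2) + of_real k * (1 - of_nat N) * v i) / (of_real k * (v i)^2)
        = (\<Sum>j\<in>{1..N} - {i}. 2 / (v j - v i))" using assms(7) i by auto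
    have "(\<Sum>j\<in>{1..N} - {i}. 2 / (v j - v i)) = - 2 * (\<Sum>j\<in>{1..N}-{i}. 1 / (v i - v j))"
      unfolding sum_distrib_left
    proof (rule sum.cong[OF refl])
      fix j
      have "v j - v i = - (v i - v j)" by simp
      then show "2 / (v j - v i) = - 2 * (1 / (v i - v j))" by (simp only: divide_minus_right) simp
    qed
    with h have "(c * of_real k * (1 - (v i)^2) + of_real k * (1 - of_nat N) * v i) / (of_real k * (v i)^2)
        = - 2 * (\<Sum>j\<in>{1..N}-{i}. 1 / (v i - v j))" by (simp add: cE)
    then show "c * (1 - (v i)^2) + (1 - of_nat N) * v i
        = - 2 * (v i)^2 * (\<Sum>j\<in>{1..N}-{i}. 1 / (v i - v j))"
    proof -
      define S where "S = (\<Sum>j\<in>{1..N}-{i}. 1 / (v i - v j))"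
      assume hh: "(c * of_real k * (1 - (v i)^2) + of_real k * (1 - of_nat N) * v i) / (of_real k * (v i)^2)
        = - 2 * (\<Sum>j\<in>{1..N}-{i}. 1 / (v i - v j))"
      have "c * of_real k * (1 - (v i)^2) + of_real k * (1 - of_nat N) * v i = - 2 * S * (of_real k * (v i)^2)"
        using hh kne vi unfolding S_def by (simp add: divide_eq_eq)
      then have "of_real k * (c * (1 - (v i)^2) + (1 - of_nat N) * v i) = of_real k * (- 2 * (v i)^2 * S)"
        by (simp add: algebra_simps)
      then have "c * (1 - (v i)^2) + (1 - of_nat N) * v i = - 2 * (v i)^2 * S"
        by (simp only: mult_left_cancel[OF kne])
      then show ?thesis unfolding S_def .
    qed
  qed
  have Q0: "Q = 0" unfolding Q_def P_def by (rule Q_zero[OF assms(1) assms(5) root])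
  define G where "G z = exp (- c * (exp z + exp (- z)) / 2 - n * z / 2)" for z
  define A where "A z = - c * (exp z - exp (- z)) / 2 - n / 2" for z :: complex
  define p where "p = poly P"
  define p1 where "p1 = poly (pderiv P)"
  define p2 where "p2 = poly (pderiv (pderiv P))"
  define F where "F z = G z * p (exp z)" for z
  define F1 where "F1 z = G z * A z * p (exp z) + G z * (p1 (exp z) * exp z)" for z
  define F2 where "F2 z = (G z * A z * A z + G z * (- c * (exp z + exp (- z)) / 2)) * p (exp z)
      + G z * A z * (p1 (exp z) * exp z)
      + (G z * A z * (p1 (exp z) * exp z) + G z * (p2 (exp z) * exp z * exp z + p1 (exp z) * exp z))" for z
  have dG: "(G has_field_derivative G z * A z) (at z)" for z
    unfolding G_def A_def by (rule G_deriv)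
  have dA: "(A has_field_derivative - c * (exp z + exp (- z)) / 2) (at z)" for z
    unfolding A_def by (rule A_deriv)
  have dp: "((\<lambda>z. p (exp z)) has_field_derivative p1 (exp z) * exp z) (at z)" for z
    unfolding p_def p1_def by (rule polyexp_deriv)
  have dp1: "((\<lambda>z. p1 (exp z)) has_field_derivative p2 (exp z) * exp z) (at z)" for z
    unfolding p2_def p1_def by (rule polyexp_deriv)
  have dF: "(F has_field_derivative F1 z) (at z)" for z
  proof -
    have "((\<lambda>z. G z * p (exp z)) has_field_derivative G z * A z * p (exp z) + G z * (p1 (exp z) * exp z)) (at z)"
      by (rule DERIV_cong[OF DERIV_mult[OF dG dp]]) (simp add: algebra_simps)
    then show ?thesis unfolding F_def[abs_def] F1_def .
  qed
  have dF1: "(F1 has_field_derivative F2 z) (at z)" for z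
  proof -
    have "((\<lambda>z. G z * A z * p (exp z) + G z * (p1 (exp z) * exp z)) has_field_derivative F2 z) (at z)"
      by (rule DERIV_cong[OF DERIV_add[OF DERIV_mult[OF DERIV_mult[OF dG dA] dp] DERIV_mult[OF dG DERIV_mult[OF dp1 DERIV_exp]]]])
        (simp add: F2_def algebra_simps)
    then show ?thesis unfolding F1_def[abs_def] .
  qed
  have psi_eq: "psiN \<gamma> N v t = F (of_real t)" for t
  proof -
    define z where "z = complex_of_real t"
    have e1: "complex_of_real (exp (- \<gamma> * cosh t)) = exp (- c * (exp z + exp (- z)) / 2)"
      unfolding c_def z_def by (simp add: cosh_field_def flip: exp_of_real)
    have e2: "complex_of_real (exp (t / 2)) - v j * complex_of_real (exp (- t / 2))
        = exp (- z / 2) * (exp z - v j)" for j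
    proof -
      have "exp z = exp (z/2) * exp (z/2)" by (simp flip: exp_add)
      moreover have "exp (z/2) * exp (- z / 2) = 1" by (simp flip: exp_add)
      ultimately have "exp (- z / 2) * exp z = exp (z/2)"
        by (metis mult.assoc mult.commute mult_1_right)
      then show ?thesis unfolding z_def by (simp add: algebra_simps flip: exp_of_real)
    qed
    have e3: "(\<Prod>j\<in>{1..N}. exp (- z / 2) * (exp z - v j)) = exp (- n * z / 2) * p (exp z)"
    proof -
      have "(\<Prod>j\<in>{1..N}. exp (- z / 2) * (exp z - v j)) = exp (- z / 2) ^ N * (\<Prod>j\<in>{1..N}. (exp z - v j))"
        by (simp add: prod.distrib)
      also have "exp (- z / 2) ^ N = exp (- n * z / 2)"
        unfolding n_def by (simp flip: exp_of_nat_mult)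
      also have "(\<Prod>j\<in>{1..N}. (exp z - v j)) = p (exp z)"
        unfolding p_def P_def by (simp add: poly_prod)
      finally show ?thesis .
    qed
    have "psiN \<gamma> N v t = exp (- c * (exp z + exp (- z)) / 2) * (exp (- n * z / 2) * p (exp z))"
      unfolding psiN_def e1 e2 e3 ..
    also have "\<dots> = exp (- c * (exp z + exp (- z)) / 2 + (- n * z / 2)) * p (exp z)"
      by (simp only: exp_add mult.assoc)
    also have "- c * (exp z + exp (- z)) / 2 + (- n * z / 2) = - c * (exp z + exp (- z)) / 2 - n * z / 2"
      by simp
    also have "exp (- c * (exp z + exp (- z)) / 2 - n * z / 2) * p (exp z) = F z"
      unfolding F_def G_def ..
    finally show ?thesis unfolding z_def .
  qed
  have psi_fun: "psiN \<gamma> N v = (\<lambda>t. F (of_real t))" by (rule ext) (simp add: psi_eq)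
  have vd1: "vector_derivative (psiN \<gamma> N v) (at t) = F1 (of_real t)" for t
    unfolding psi_fun by (rule vector_derivative_at[OF has_vector_derivative_real_field[OF dF]])
  have vd2: "vector_derivative (\<lambda>t. vector_derivative (psiN \<gamma> N v) (at t)) (at x) = F2 (of_real x)"
    unfolding vd1 by (rule vector_derivative_at[OF has_vector_derivative_real_field[OF dF1]])
  define z where "z = complex_of_real x"
  define e where "e = exp z"
  define ei where "ei = exp (- z)"
  have eei: "e * ei = 1" unfolding e_def ei_def by (simp flip: exp_add)
  have V: "complex_of_real (VN \<gamma> N x) = c^2 * ((e - ei)/2)^2 - (n+1)*c*((e + ei)/2)"
    unfolding VN_def c_def n_def e_def ei_def z_def by (simp add: sinh_field_def cosh_field_def flip: exp_of_real)
  have E2: "2 * E / of_real k = - (n^2) / 4 + c * s"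
    unfolding assms(8) cE n_def s_def using kne by (simp add: field_simps)
  have Qe: "poly Q e = 0" using Q0 by simp
  have Qe': "poly Q e = - (e^2) * p2 e + (n - 1) * e * p1 e + c * (e^2 * p1 e - p1 e) - c * (n * e * p e + s * p e)"
    unfolding Q_def p_def p1_def p2_def n_def s_def by (simp add: algebra_simps power2_eq_square)
  have key: "- F2 z + (c^2 * ((e - ei)/2)^2 - (n+1)*c*((e + ei)/2)) * F z - (- (n^2) / 4 + c * s) * F z = G z * poly Q e"
  proof -
    have "- F2 z + (c^2 * ((e - ei)/2)^2 - (n+1)*c*((e + ei)/2)) * F z - (- (n^2) / 4 + c * s) * F z
        = G z * poly Q e + G z * c * p1 e * (1 - e * ei)"
      unfolding Qe' F2_def F_def A_def e_def[symmetric] ei_def[symmetric]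
      by (simp add: field_simps power2_eq_square)
    then show ?thesis using eei by simp
  qed
  show "- vector_derivative (\<lambda>t. vector_derivative (psiN \<gamma> N v) (at t)) (at x)
      + complex_of_real (VN \<gamma> N x) * psiN \<gamma> N v x
    = 2 * E / of_real k * psiN \<gamma> N v x"
    unfolding vd2 V E2 psi_eq z_def[symmetric] using key Qe by (simp add: algebra_simps)
qed
end
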